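(* Let $n,m\in\omega\cup\{\infty\}$. Every $C_{n,m}$-homogeneous linear ordering is $sp$-homogeneous.
   Context: For a linear ordering $L$, $s(x)$ is the immediate successor of $x$ if it exists and $x$ otherwise, $p(x)$ the immediate predecessor if it exists and $x$ otherwise; $L$ is $sp$-homogeneous if $(L,<,s,p)$ is homogeneous (every isomorphism between finitely generated substructures extends to an automorphism). For $i\in\omega$: $S_i(x)$ holds iff $x$ has exactly $i$ successors (i.e. exactly $i$ elements $y>x$ with only finitely many elements between $x$ and $y$); $P_j(x)$ holds iff $x$ has exactly $j$ predecessors (defined dually); $Adj_k(x,y)$ holds iff there are exactly $k$ elements strictly between $x$ and $y$. $L$ is $C_{n,m}$-homogeneous if its expansion by the definable relations $\{S_i\}_{i<n}$, $\{P_j\}_{j<m}$, $\{Adj_k\}_{k<n+m}$ (with $i<\infty$ meaning all $i\in\omega$) is homogeneous, i.e. every isomorphism between finite substructures of the expansion extends to an automorphism. *)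

theory Defs
  imports Main "HOL-Library.Extended_Nat"
begin

text \<open>A linear ordering is represented by a carrier set A inside a linearly ordered type.\<close>

definition imm_succ :: "'a::linorder set \<Rightarrow> 'a \<Rightarrow> 'a \<Rightarrow> bool" where
  "imm_succ A x y \<longleftrightarrow> y \<in> A \<and> x < y \<and> (\<forall>z\<in>A. \<not> (x < z \<and> z < y))"

definition imm_pred :: "'a::linorder set \<Rightarrow> 'a \<Rightarrow> 'a \<Rightarrow> bool" where
  "imm_pred A x y \<longleftrightarrow> y \<in> A \<and> y < x \<and> (\<forall>z\<in>A. \<not> (y < z \<and> z < x))"

definition sfun :: "'a::linorder set \<Rightarrow> 'a \<Rightarrow> 'a" where
  "sfun A x = (if \<exists>y. imm_succ A x y then (THE y. imm_succ A x y) else x)"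

definition pfun :: "'a::linorder set \<Rightarrow> 'a \<Rightarrow> 'a" where
  "pfun A x = (if \<exists>y. imm_pred A x y then (THE y. imm_pred A x y) else x)"

definition betw :: "'a::linorder set \<Rightarrow> 'a \<Rightarrow> 'a \<Rightarrow> 'a set" where
  "betw A x y = {z \<in> A. min x y < z \<and> z < max x y}"

definition succs :: "'a::linorder set \<Rightarrow> 'a \<Rightarrow> 'a set" where
  "succs A x = {y \<in> A. x < y \<and> finite (betw A x y)}"

definition preds :: "'a::linorder set \<Rightarrow> 'a \<Rightarrow> 'a set" where
  "preds A x = {y \<in> A. y < x \<and> finite (betw A y x)}"

definition S_rel :: "'a::linorder set \<Rightarrow> nat \<Rightarrow> 'a \<Rightarrow> bool" where
  "S_rel A i x \<longleftrightarrow> finite (succs A x) \<and> card (succs A x) = i"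

definition P_rel :: "'a::linorder set \<Rightarrow> nat \<Rightarrow> 'a \<Rightarrow> bool" where
  "P_rel A j x \<longleftrightarrow> finite (preds A x) \<and> card (preds A x) = j"

definition Adj_rel :: "'a::linorder set \<Rightarrow> nat \<Rightarrow> 'a \<Rightarrow> 'a \<Rightarrow> bool" where
  "Adj_rel A k x y \<longleftrightarrow> finite (betw A x y) \<and> card (betw A x y) = k"

inductive_set sp_closure :: "'a::linorder set \<Rightarrow> 'a set \<Rightarrow> 'a set" for A B where
  base: "x \<in> B \<Longrightarrow> x \<in> sp_closure A B"
| succ: "x \<in> sp_closure A B \<Longrightarrow> sfun A x \<in> sp_closure A B"
| pred: "x \<in> sp_closure A B \<Longrightarrow> pfun A x \<in> sp_closure A B"

definition order_iso_on :: "'a::linorder set \<Rightarrow> ('a \<Rightarrow> 'a) \<Rightarrow> bool" where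
  "order_iso_on C f \<longleftrightarrow> (\<forall>x\<in>C. \<forall>y\<in>C. x < y \<longleftrightarrow> f x < f y)"

definition sp_automorphism :: "'a::linorder set \<Rightarrow> ('a \<Rightarrow> 'a) \<Rightarrow> bool" where
  "sp_automorphism A g \<longleftrightarrow> bij_betw g A A \<and> order_iso_on A g
     \<and> (\<forall>x\<in>A. g (sfun A x) = sfun A (g x) \<and> g (pfun A x) = pfun A (g x))"

definition sp_homogeneous :: "'a::linorder set \<Rightarrow> bool" where
  "sp_homogeneous A \<longleftrightarrow>
     (\<forall>B f. finite B \<and> B \<subseteq> A \<and> f ` sp_closure A B \<subseteq> A
        \<and> order_iso_on (sp_closure A B) f
        \<and> (\<forall>x\<in>sp_closure A B. f (sfun A x) = sfun A (f x) \<and> f (pfun A x) = pfun A (f x))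
        \<longrightarrow> (\<exists>g. sp_automorphism A g \<and> (\<forall>x\<in>sp_closure A B. g x = f x)))"

definition Cnm_preserving :: "enat \<Rightarrow> enat \<Rightarrow> 'a::linorder set \<Rightarrow> 'a set \<Rightarrow> ('a \<Rightarrow> 'a) \<Rightarrow> bool" where
  "Cnm_preserving n m A C f \<longleftrightarrow> order_iso_on C f
     \<and> (\<forall>i. enat i < n \<longrightarrow> (\<forall>x\<in>C. S_rel A i x \<longleftrightarrow> S_rel A i (f x)))
     \<and> (\<forall>j. enat j < m \<longrightarrow> (\<forall>x\<in>C. P_rel A j x \<longleftrightarrow> P_rel A j (f x)))
     \<and> (\<forall>k. enat k < n + m \<longrightarrow> (\<forall>x\<in>C. \<forall>y\<in>C. Adj_rel A k x y \<longleftrightarrow> Adj_rel A k (f x) (f y)))"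

definition Cnm_homogeneous :: "enat \<Rightarrow> enat \<Rightarrow> 'a::linorder set \<Rightarrow> bool" where
  "Cnm_homogeneous n m A \<longleftrightarrow>
     (\<forall>B f. finite B \<and> B \<subseteq> A \<and> f ` B \<subseteq> A \<and> Cnm_preserving n m A B f
        \<longrightarrow> (\<exists>g. bij_betw g A A \<and> Cnm_preserving n m A A g \<and> (\<forall>x\<in>B. g x = f x)))"

end

theory Submission
  imports Defs
begin

lemma betw_sym: "betw A x y = betw A y x"
  by (simp add: betw_def min.commute max.commute)

lemma betw_lt: "x < y \<Longrightarrow> betw A x y = {z\<in>A. x < z \<and> z < y}"
  by (auto simp: betw_def min_def max_def)

lemma betw_empty_succ: "x < y \<Longrightarrow> y \<in> A \<Longrightarrow> betw A x y = {} \<Longrightarrow> imm_succ A x y"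
  by (auto simp: imm_succ_def betw_lt)

lemma betw_empty_pred: "x < y \<Longrightarrow> x \<in> A \<Longrightarrow> betw A x y = {} \<Longrightarrow> imm_pred A y x"
  by (auto simp: imm_pred_def betw_lt)

lemma imm_succ_betw: "imm_succ A x y \<Longrightarrow> betw A x y = {}"
  by (auto simp: imm_succ_def betw_lt)

lemma imm_pred_betw: "imm_pred A y x \<Longrightarrow> betw A x y = {}"
  by (auto simp: imm_pred_def betw_lt)

lemma imm_succ_split: "imm_succ A x z \<Longrightarrow> z < y \<Longrightarrow> betw A x y = insert z (betw A z y)"
proof -
  assume a: "imm_succ A x z" "z < y"
  hence xz: "x < z" by (simp add: imm_succ_def)
  show ?thesis using a xz unfolding betw_lt[OF a(2)] betw_lt[OF order.strict_trans[OF xz a(2)]] imm_succ_def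
    apply (intro set_eqI iffI)
    apply (metis (no_types, lifting) insert_iff mem_Collect_eq not_less_iff_gr_or_eq)
    by auto
qed

lemma imm_pred_split: "imm_pred A y z \<Longrightarrow> x < z \<Longrightarrow> betw A x y = insert z (betw A x z)"
proof -
  assume a: "imm_pred A y z" "x < z"
  hence xz: "z < y" by (simp add: imm_pred_def)
  show ?thesis using a xz unfolding betw_lt[OF a(2)] betw_lt[OF order.strict_trans[OF a(2) xz]] imm_pred_def
    apply (intro set_eqI iffI)
    apply (metis (no_types, lifting) insert_iff mem_Collect_eq not_less_iff_gr_or_eq)
    by auto
qed

lemma betw_min:
  assumes "x < y" "finite (betw A x y)" "betw A x y \<noteq> {}"
  shows "\<exists>z. imm_succ A x z \<and> z < y \<and> betw A x y = insert z (betw A z y) \<and> z \<notin> betw A z y"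
proof -
  define z where "z = Min (betw A x y)"
  have zin: "z \<in> betw A x y" using assms Min_in z_def by blast
  have zmin: "\<And>w. w \<in> betw A x y \<Longrightarrow> z \<le> w" using assms z_def by simp
  have "imm_succ A x z"
    unfolding imm_succ_def using zin zmin assms(1) betw_lt[OF assms(1)]
    by (smt (verit) leD mem_Collect_eq order.strict_trans)
  moreover have "z < y" using zin betw_lt[OF assms(1)] by auto
  moreover have "z \<notin> betw A z y" using betw_lt[of z y A] \<open>z < y\<close> by auto
  ultimately show ?thesis using imm_succ_split by blast
qed

lemma betw_max:
  assumes "x < y" "finite (betw A x y)" "betw A x y \<noteq> {}"
  shows "\<exists>z. imm_pred A y z \<and> x < z \<and> betw A x y = insert z (betw A x z) \<and> z \<notin> betw A x z"
proof -
  define z where "z = Max (betw A x y)"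
  have zin: "z \<in> betw A x y" using assms Max_in z_def by blast
  have zmax: "\<And>w. w \<in> betw A x y \<Longrightarrow> w \<le> z" using assms z_def by simp
  have "imm_pred A y z"
    unfolding imm_pred_def using zin zmax assms(1) betw_lt[OF assms(1)]
    by (smt (verit) leD mem_Collect_eq order.strict_trans)
  moreover have "x < z" using zin betw_lt[OF assms(1)] by auto
  moreover have "z \<notin> betw A x z" using betw_lt[of x z A] \<open>x < z\<close> by auto
  ultimately show ?thesis using imm_pred_split by blast
qed

lemma sfun_eq: "imm_succ A x y \<Longrightarrow> sfun A x = y"
  unfolding sfun_def
  apply (simp add: exI[of _ y])
  apply (rule the_equality, assumption)
  by (metis imm_succ_def not_less_iff_gr_or_eq)

lemma pfun_eq: "imm_pred A x y \<Longrightarrow> pfun A x = y"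
  unfolding pfun_def
  apply (simp add: exI[of _ y])
  apply (rule the_equality, assumption)
  by (metis imm_pred_def not_less_iff_gr_or_eq)

lemma sfun_cases: "(\<exists>y. imm_succ A x y \<and> sfun A x = y) \<or> ((\<nexists>y. imm_succ A x y) \<and> sfun A x = x)"
  using sfun_eq by (metis sfun_def)

lemma pfun_cases: "(\<exists>y. imm_pred A x y \<and> pfun A x = y) \<or> ((\<nexists>y. imm_pred A x y) \<and> pfun A x = x)"
  using pfun_eq by (metis pfun_def)

lemma sfun_in: "x \<in> A \<Longrightarrow> sfun A x \<in> A"
  using sfun_cases[of A x] imm_succ_def by metis

lemma pfun_in: "x \<in> A \<Longrightarrow> pfun A x \<in> A"
  using pfun_cases[of A x] imm_pred_def by metis

lemma sfun_ne: "sfun A x \<noteq> x \<Longrightarrow> imm_succ A x (sfun A x)"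
  using sfun_cases[of A x] by metis

lemma pfun_ne: "pfun A x \<noteq> x \<Longrightarrow> imm_pred A x (pfun A x)"
  using pfun_cases[of A x] by metis

lemma aut_sfun:
  assumes g: "bij_betw g A A" "order_iso_on A g" and x: "x \<in> A"
  shows "g (sfun A x) = sfun A (g x)"
proof (cases "\<exists>y. imm_succ A x y")
  case True
  then obtain y where y: "imm_succ A x y" by blast
  have "imm_succ A (g x) (g y)"
    unfolding imm_succ_def
  proof (intro conjI ballI)
    show "g y \<in> A" using y g bij_betwE imm_succ_def by metis
    show "g x < g y" using y g x unfolding order_iso_on_def imm_succ_def by blast
    fix z assume z: "z \<in> A"
    then obtain z' where "z' \<in> A" "z = g z'" using g bij_betw_imp_surj_on by (metis imageE)
    then show "\<not> (g x < z \<and> z < g y)" using y g x unfolding order_iso_on_def imm_succ_def by blast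
  qed
  then show ?thesis using sfun_eq y by metis
next
  case False
  have "\<nexists>w. imm_succ A (g x) w"
  proof
    assume "\<exists>w. imm_succ A (g x) w"
    then obtain w where w: "imm_succ A (g x) w" by blast
    then obtain y where y: "y \<in> A" "w = g y" using g bij_betw_imp_surj_on imm_succ_def by (metis imageE)
    have "imm_succ A x y"
      unfolding imm_succ_def
    proof (intro conjI ballI)
      show "y \<in> A" by fact
      show "x < y" using w y g x unfolding order_iso_on_def imm_succ_def by blast
      fix z assume z: "z \<in> A"
      have "g z \<in> A" using z g bij_betwE by metis
      then show "\<not> (x < z \<and> z < y)" using w y g x z unfolding order_iso_on_def imm_succ_def by blast
    qed
    then show False using False by blast
  qed
  then show ?thesis using False by (simp add: sfun_def)
qed

lemma aut_pfun:
  assumes g: "bij_betw g A A" "order_iso_on A g" and x: "x \<in> A"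
  shows "g (pfun A x) = pfun A (g x)"
proof (cases "\<exists>y. imm_pred A x y")
  case True
  then obtain y where y: "imm_pred A x y" by blast
  have "imm_pred A (g x) (g y)"
    unfolding imm_pred_def
  proof (intro conjI ballI)
    show "g y \<in> A" using y g bij_betwE imm_pred_def by metis
    show "g y < g x" using y g x unfolding order_iso_on_def imm_pred_def by blast
    fix z assume z: "z \<in> A"
    then obtain z' where "z' \<in> A" "z = g z'" using g bij_betw_imp_surj_on by (metis imageE)
    then show "\<not> (g y < z \<and> z < g x)" using y g x unfolding order_iso_on_def imm_pred_def by blast
  qed
  then show ?thesis using pfun_eq y by metis
next
  case False
  have "\<nexists>w. imm_pred A (g x) w"
  proof
    assume "\<exists>w. imm_pred A (g x) w"
    then obtain w where w: "imm_pred A (g x) w" by blast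
    then obtain y where y: "y \<in> A" "w = g y" using g bij_betw_imp_surj_on imm_pred_def by (metis imageE)
    have "imm_pred A x y"
      unfolding imm_pred_def
    proof (intro conjI ballI)
      show "y \<in> A" by fact
      show "y < x" using w y g x unfolding order_iso_on_def imm_pred_def by blast
      fix z assume z: "z \<in> A"
      have "g z \<in> A" using z g bij_betwE by metis
      then show "\<not> (y < z \<and> z < x)" using w y g x z unfolding order_iso_on_def imm_pred_def by blast
    qed
    then show False using False by blast
  qed
  then show ?thesis using False by (simp add: pfun_def)
qed


locale spctx =
  fixes A C :: "'a::linorder set" and f :: "'a \<Rightarrow> 'a"
  assumes CA: "C \<subseteq> A"
    and Cs: "\<And>x. x \<in> C \<Longrightarrow> sfun A x \<in> C"
    and Cp: "\<And>x. x \<in> C \<Longrightarrow> pfun A x \<in> C"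
    and fA: "\<And>x. x \<in> C \<Longrightarrow> f x \<in> A"
    and iso: "\<And>x y. x \<in> C \<Longrightarrow> y \<in> C \<Longrightarrow> x < y \<longleftrightarrow> f x < f y"
    and fs: "\<And>x. x \<in> C \<Longrightarrow> f (sfun A x) = sfun A (f x)"
    and fp: "\<And>x. x \<in> C \<Longrightarrow> f (pfun A x) = pfun A (f x)"
begin

lemma inj: "inj_on f C"
  by (metis inj_onI iso not_less_iff_gr_or_eq)

lemma R_s:
  "x \<in> C \<Longrightarrow> y \<in> A \<Longrightarrow> x < y \<Longrightarrow> finite (betw A x y) \<Longrightarrow>
   y \<in> C \<and> betw A x y \<subseteq> C \<and> betw A (f x) (f y) = f ` betw A x y"
proof (induction "card (betw A x y)" arbitrary: x rule: less_induct)
  case less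
  show ?case
  proof (cases "betw A x y = {}")
    case True
    then have "imm_succ A x y" using betw_empty_succ less.prems by metis
    hence sy: "sfun A x = y" by (rule sfun_eq)
    hence yC: "y \<in> C" using Cs less.prems by auto
    have lt: "f x < f y" using iso less.prems yC by blast
    have "sfun A (f x) = f y" using fs sy less.prems by metis
    hence "imm_succ A (f x) (f y)" using sfun_ne[of A "f x"] lt by auto
    hence "betw A (f x) (f y) = {}" by (rule imm_succ_betw)
    thus ?thesis using True yC by auto
  next
    case False
    obtain z where z: "imm_succ A x z" "z < y" "betw A x y = insert z (betw A z y)" "z \<notin> betw A z y"
      using betw_min[OF less.prems(3,4) False] by blast
    have zx: "sfun A x = z" using z(1) by (rule sfun_eq)
    have zC: "z \<in> C" using Cs less.prems zx by metis
    have fin: "finite (betw A z y)" using z(3) less.prems(4) by auto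
    have card: "card (betw A z y) < card (betw A x y)" using z(3,4) fin by simp
    have IH: "y \<in> C \<and> betw A z y \<subseteq> C \<and> betw A (f z) (f y) = f ` betw A z y"
      using less.hyps[OF card zC less.prems(2) z(2) fin] .
    have xz: "x < z" using z(1) imm_succ_def by metis
    have "f x < f z" "f z < f y" using iso xz z(2) zC IH less.prems by blast+
    moreover have "sfun A (f x) = f z" using fs zx less.prems by metis
    ultimately have "imm_succ A (f x) (f z)" using sfun_ne[of A "f x"] by auto
    hence "betw A (f x) (f y) = insert (f z) (betw A (f z) (f y))"
      using imm_succ_split \<open>f z < f y\<close> by metis
    thus ?thesis using IH z(3) zC by auto
  qed
qed

lemma G_s:
  "x \<in> C \<Longrightarrow> w \<in> A \<Longrightarrow> f x < w \<Longrightarrow> finite (betw A (f x) w) \<Longrightarrow>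
   \<exists>y\<in>C. w = f y \<and> finite (betw A x y)"
proof (induction "card (betw A (f x) w)" arbitrary: x rule: less_induct)
  case less
  define x' where "x' = sfun A x"
  have x'C: "x' \<in> C" using Cs less.prems x'_def by metis
  have fx': "f x' = sfun A (f x)" using fs less.prems x'_def by metis
  show ?case
  proof (cases "betw A (f x) w = {}")
    case True
    then have "imm_succ A (f x) w" using betw_empty_succ less.prems by metis
    hence "sfun A (f x) = w" by (rule sfun_eq)
    hence "f x' = w" using fx' by simp
    hence "x' \<noteq> x" using less.prems by auto
    hence "imm_succ A x x'" using sfun_ne x'_def by metis
    hence "betw A x x' = {}" by (rule imm_succ_betw)
    thus ?thesis using x'C \<open>f x' = w\<close> by auto
  next
    case False
    obtain z where z: "imm_succ A (f x) z" "z < w" "betw A (f x) w = insert z (betw A z w)" "z \<notin> betw A z w"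
      using betw_min[OF less.prems(3,4) False] by blast
    have fz: "f x' = z" using fx' sfun_eq[OF z(1)] by simp
    hence "x' \<noteq> x" using z(1) imm_succ_def by auto
    hence sx: "imm_succ A x x'" using sfun_ne x'_def by metis
    have xx': "x < x'" using sx imm_succ_def by metis
    have fin: "finite (betw A z w)" using z(3) less.prems(4) by auto
    have card: "card (betw A (f x') w) < card (betw A (f x) w)" using z(3,4) fin fz by simp
    obtain y where y: "y \<in> C" "w = f y" "finite (betw A x' y)"
      using less.hyps[OF card x'C less.prems(2)] fz z(2) fin by auto
    have "x' < y" using iso x'C y fz z(2) by blast
    hence "betw A x y = insert x' (betw A x' y)" using imm_succ_split sx by metis
    thus ?thesis using y by auto
  qed
qed

lemma R_p:
  "x \<in> C \<Longrightarrow> y \<in> A \<Longrightarrow> y < x \<Longrightarrow> finite (betw A y x) \<Longrightarrow>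
   y \<in> C \<and> betw A y x \<subseteq> C \<and> betw A (f y) (f x) = f ` betw A y x"
proof (induction "card (betw A y x)" arbitrary: x rule: less_induct)
  case less
  show ?case
  proof (cases "betw A y x = {}")
    case True
    then have "imm_pred A x y" using betw_empty_pred less.prems by metis
    hence sy: "pfun A x = y" by (rule pfun_eq)
    hence yC: "y \<in> C" using Cp less.prems by auto
    have lt: "f y < f x" using iso less.prems yC by blast
    have "pfun A (f x) = f y" using fp sy less.prems by metis
    hence "imm_pred A (f x) (f y)" using pfun_ne[of A "f x"] lt by auto
    hence "betw A (f y) (f x) = {}" by (rule imm_pred_betw)
    thus ?thesis using True yC by auto
  next
    case False
    obtain z where z: "imm_pred A x z" "y < z" "betw A y x = insert z (betw A y z)" "z \<notin> betw A y z"
      using betw_max[OF less.prems(3,4) False] by blast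
    have zx: "pfun A x = z" using z(1) by (rule pfun_eq)
    have zC: "z \<in> C" using Cp less.prems zx by metis
    have fin: "finite (betw A y z)" using z(3) less.prems(4) by auto
    have card: "card (betw A y z) < card (betw A y x)" using z(3,4) fin by simp
    have IH: "y \<in> C \<and> betw A y z \<subseteq> C \<and> betw A (f y) (f z) = f ` betw A y z"
      using less.hyps[OF card zC less.prems(2) z(2) fin] .
    have xz: "z < x" using z(1) imm_pred_def by metis
    have "f z < f x" "f y < f z" using iso xz z(2) zC IH less.prems by blast+
    moreover have "pfun A (f x) = f z" using fp zx less.prems by metis
    ultimately have "imm_pred A (f x) (f z)" using pfun_ne[of A "f x"] by auto
    hence "betw A (f y) (f x) = insert (f z) (betw A (f y) (f z))"
      using imm_pred_split \<open>f y < f z\<close> by metis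
    thus ?thesis using IH z(3) zC by auto
  qed
qed

lemma G_p:
  "x \<in> C \<Longrightarrow> w \<in> A \<Longrightarrow> w < f x \<Longrightarrow> finite (betw A w (f x)) \<Longrightarrow>
   \<exists>y\<in>C. w = f y \<and> finite (betw A y x)"
proof (induction "card (betw A w (f x))" arbitrary: x rule: less_induct)
  case less
  define x' where "x' = pfun A x"
  have x'C: "x' \<in> C" using Cp less.prems x'_def by metis
  have fx': "f x' = pfun A (f x)" using fp less.prems x'_def by metis
  show ?case
  proof (cases "betw A w (f x) = {}")
    case True
    then have "imm_pred A (f x) w" using betw_empty_pred less.prems by metis
    hence "pfun A (f x) = w" by (rule pfun_eq)
    hence "f x' = w" using fx' by simp
    hence "x' \<noteq> x" using less.prems by auto
    hence "imm_pred A x x'" using pfun_ne x'_def by metis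
    hence "betw A x' x = {}" by (rule imm_pred_betw)
    thus ?thesis using x'C \<open>f x' = w\<close> by auto
  next
    case False
    obtain z where z: "imm_pred A (f x) z" "w < z" "betw A w (f x) = insert z (betw A w z)" "z \<notin> betw A w z"
      using betw_max[OF less.prems(3,4) False] by blast
    have fz: "f x' = z" using fx' pfun_eq[OF z(1)] by simp
    hence "x' \<noteq> x" using z(1) imm_pred_def by auto
    hence sx: "imm_pred A x x'" using pfun_ne x'_def by metis
    have xx': "x' < x" using sx imm_pred_def by metis
    have fin: "finite (betw A w z)" using z(3) less.prems(4) by auto
    have card: "card (betw A w (f x')) < card (betw A w (f x))" using z(3,4) fin fz by simp
    obtain y where y: "y \<in> C" "w = f y" "finite (betw A y x')"
      using less.hyps[OF card x'C less.prems(2)] fz z(2) fin by auto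
    have "y < x'" using iso x'C y fz z(2) by blast
    hence "betw A y x = insert x' (betw A y x')" using imm_pred_split sx by metis
    thus ?thesis using y by auto
  qed
qed

lemma succs_img: assumes x: "x \<in> C" shows "succs A x \<subseteq> C" "f ` succs A x = succs A (f x)"
proof -
  show "succs A x \<subseteq> C" using R_s x unfolding succs_def by blast
  show "f ` succs A x = succs A (f x)"
  proof (intro set_eqI iffI)
    fix w assume "w \<in> f ` succs A x"
    then obtain y where y: "y \<in> succs A x" "w = f y" by blast
    have "y \<in> C \<and> betw A (f x) (f y) = f ` betw A x y" using R_s x y unfolding succs_def by blast
    then show "w \<in> succs A (f x)" using y fA iso x unfolding succs_def by auto
  next
    fix w assume w: "w \<in> succs A (f x)"
    then obtain y where y: "y \<in> C" "w = f y" "finite (betw A x y)" using G_s x unfolding succs_def by blast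
    have "x < y" using iso x y w unfolding succs_def by blast
    then show "w \<in> f ` succs A x" using y CA unfolding succs_def by auto
  qed
qed

lemma preds_img: assumes x: "x \<in> C" shows "preds A x \<subseteq> C" "f ` preds A x = preds A (f x)"
proof -
  show "preds A x \<subseteq> C" using R_p x unfolding preds_def by blast
  show "f ` preds A x = preds A (f x)"
  proof (intro set_eqI iffI)
    fix w assume "w \<in> f ` preds A x"
    then obtain y where y: "y \<in> preds A x" "w = f y" by blast
    have "y \<in> C \<and> betw A (f y) (f x) = f ` betw A y x" using R_p x y unfolding preds_def by blast
    then show "w \<in> preds A (f x)" using y fA iso x unfolding preds_def by auto
  next
    fix w assume w: "w \<in> preds A (f x)"
    then obtain y where y: "y \<in> C" "w = f y" "finite (betw A y x)" using G_p x unfolding preds_def by blast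
    have "y < x" using iso x y w unfolding preds_def by blast
    then show "w \<in> f ` preds A x" using y CA unfolding preds_def by auto
  qed
qed

lemma S_pres: "x \<in> C \<Longrightarrow> S_rel A i x \<longleftrightarrow> S_rel A i (f x)"
proof -
  assume x: "x \<in> C"
  have "inj_on f (succs A x)" using inj succs_img(1)[OF x] inj_on_subset by blast
  then show ?thesis unfolding S_rel_def using succs_img(2)[OF x]
    by (metis card_image finite_image_iff)
qed

lemma P_pres: "x \<in> C \<Longrightarrow> P_rel A i x \<longleftrightarrow> P_rel A i (f x)"
proof -
  assume x: "x \<in> C"
  have "inj_on f (preds A x)" using inj preds_img(1)[OF x] inj_on_subset by blast
  then show ?thesis unfolding P_rel_def using preds_img(2)[OF x]
    by (metis card_image finite_image_iff)
qed

lemma Adj_pres_lt: assumes x: "x \<in> C" and y: "y \<in> C" and xy: "x < y"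
  shows "Adj_rel A k x y \<longleftrightarrow> Adj_rel A k (f x) (f y)"
proof (cases "finite (betw A x y)")
  case True
  then have "betw A x y \<subseteq> C" "betw A (f x) (f y) = f ` betw A x y" using R_s x y xy CA by blast+
  moreover then have "inj_on f (betw A x y)" using inj inj_on_subset by blast
  ultimately show ?thesis unfolding Adj_rel_def by (metis card_image finite_image_iff)
next
  case False
  have "\<not> finite (betw A (f x) (f y))"
  proof
    assume "finite (betw A (f x) (f y))"
    moreover have "f x < f y" using iso x y xy by blast
    ultimately obtain y' where "y' \<in> C" "f y = f y'" "finite (betw A x y')" using G_s x y fA by blast
    then show False using inj y False inj_onD by metis
  qed
  then show ?thesis using False unfolding Adj_rel_def by blast
qed

lemma Adj_pres: assumes x: "x \<in> C" and y: "y \<in> C"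
  shows "Adj_rel A k x y \<longleftrightarrow> Adj_rel A k (f x) (f y)"
proof -
  have sym: "\<And>a b. Adj_rel A k a b \<longleftrightarrow> Adj_rel A k b a" unfolding Adj_rel_def using betw_sym by metis
  consider "x < y" | "x = y" | "y < x" by fastforce
  then show ?thesis
  proof cases
    case 1 then show ?thesis using Adj_pres_lt x y by blast
  next
    case 2
    have "\<And>a. betw A a a = {}" unfolding betw_def by auto
    then show ?thesis using 2 unfolding Adj_rel_def by simp
  next
    case 3 then show ?thesis using Adj_pres_lt x y sym by blast
  qed
qed

end

lemma closure_sub: "B \<subseteq> A \<Longrightarrow> sp_closure A B \<subseteq> A"
proof
  fix x assume BA: "B \<subseteq> A" and "x \<in> sp_closure A B"
  from this(2) show "x \<in> A" using BA by (induction rule: sp_closure.induct) (auto simp: sfun_in pfun_in)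
qed

theorem mainTheorem6:
  fixes n m :: enat and A :: "'a::linorder set"
  assumes "Cnm_homogeneous n m A"
  shows "sp_homogeneous A"
  unfolding sp_homogeneous_def
proof (intro allI impI, elim conjE)
  fix B f
  assume B: "finite B" "B \<subseteq> A" and fC: "f ` sp_closure A B \<subseteq> A"
    and iso: "order_iso_on (sp_closure A B) f"
    and comm: "\<forall>x\<in>sp_closure A B. f (sfun A x) = sfun A (f x) \<and> f (pfun A x) = pfun A (f x)"
  define C where "C = sp_closure A B"
  interpret spctx A C f
    apply unfold_locales
    using closure_sub[OF B(2)] fC iso comm
    unfolding C_def order_iso_on_def by (auto intro: sp_closure.intros)
  have BC: "B \<subseteq> C" unfolding C_def by (auto intro: sp_closure.base)
  have pres: "Cnm_preserving n m A B f"
    unfolding Cnm_preserving_def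
    using BC S_pres P_pres Adj_pres iso unfolding order_iso_on_def C_def by blast
  have "f ` B \<subseteq> A" using BC fA by auto
  then obtain g where g: "bij_betw g A A" "Cnm_preserving n m A A g" "\<forall>x\<in>B. g x = f x"
    using assms B pres unfolding Cnm_homogeneous_def by blast
  have giso: "order_iso_on A g" using g(2) unfolding Cnm_preserving_def by blast
  have aut: "sp_automorphism A g"
    unfolding sp_automorphism_def using g(1) giso aut_sfun aut_pfun by blast
  have "\<forall>x\<in>sp_closure A B. g x = f x"
  proof
    fix x assume "x \<in> sp_closure A B"
    then show "g x = f x"
    proof (induction rule: sp_closure.induct)
      case (base x) then show ?case using g(3) by blast
    next
      case (succ x)
      have "x \<in> A" using succ.hyps CA C_def by blast
      then show ?case using aut_sfun[OF g(1) giso] succ fs C_def by metis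
    next
      case (pred x)
      have "x \<in> A" using pred.hyps CA C_def by blast
      then show ?case using aut_pfun[OF g(1) giso] pred fp C_def by metis
    qed
  qed
  then show "\<exists>g. sp_automorphism A g \<and> (\<forall>x\<in>sp_closure A B. g x = f x)" using aut by blast
qed

end
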